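(* Let $n,\lambda,\mu$ be positive integers with $\mu>\lambda$, and let $\mathcal{A}$ be a path decomposition of $\lambda K_n$. Then $\lambda K_n$ is $2$-extendible with respect to $(\mathcal{A},\mu K_n)$ if and only if $2|\mathcal{S}_0(\mathcal{A})|+|\mathcal{S}_1(\mathcal{A})|\le(\mu-\lambda)\frac{n(n-1)}{2}$.
   Context: Graphs may have multiple edges. $\lambda K_n$ is the loopless multigraph on $n$ vertices with every pair of distinct vertices joined by exactly $\lambda$ edges; $\lambda K_n$ is regarded as a subgraph of $\mu K_n$ on the same vertex set, and $\mu K_n\setminus\lambda K_n$ denotes the graph obtained by deleting the edges of $\lambda K_n$. A decomposition of size $k$ of a graph $G$ is an ordered $k$-tuple $(G(1),\dots,G(k))$ of spanning subgraphs of $G$ (colour classes; possibly edgeless) with pairwise disjoint edge sets whose union is $E(G)$. A path decomposition is one in which every colour class is a vertex-disjoint union of paths and cycles (two parallel edges form a cycle of length 2). $\mathcal{S}_i(\mathcal{A})$ is the set of colour classes of $\mathcal{A}$ with exactly $i$ edges. For a graph $G\subseteq H$, a path decomposition $\mathcal{A}$ of $G$ with $k$ colour classes and a positive integer $\alpha$, $G$ is $\alpha$-extendible with respect to $(\mathcal{A},H)$ if there is a graph $F\subseteq H\setminus G$ and a path decomposition $\mathcal{A}^*$ of $G\cup F$ of size $k$ whose restriction to $G$ is $\mathcal{A}$ and each $\mathcal{A}^*(i)$ has at least $\alpha$ edges. *)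

theory Defs
  imports Main
begin

text \<open>Edges of the multigraph mu K_n on vertex set {0..<n}: triples (u,v,j) with
  u < v < n and j < mu (the j-th of the mu parallel edges between u and v).
  lambda K_n is the subgraph consisting of the edges with j < lambda.
  A graph (on the fixed vertex set {0..<n}) is represented by its edge set.\<close>

definition KE :: "nat \<Rightarrow> nat \<Rightarrow> (nat \<times> nat \<times> nat) set" where
  "KE n m = {(u, v, j). u < v \<and> v < n \<and> j < m}"

definition endpoints :: "nat \<times> nat \<times> nat \<Rightarrow> nat set" where
  "endpoints e = {fst e, fst (snd e)}"

definition verts_of :: "(nat \<times> nat \<times> nat) set \<Rightarrow> nat set" where
  "verts_of P = (\<Union>e\<in>P. endpoints e)"

definition is_path :: "(nat \<times> nat \<times> nat) set \<Rightarrow> bool" where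
  "is_path P \<longleftrightarrow> (\<exists>vs es. length vs \<ge> 2 \<and> distinct vs \<and> length es = length vs - 1 \<and>
      distinct es \<and> set es = P \<and>
      (\<forall>i<length es. endpoints (es ! i) = {vs ! i, vs ! Suc i}))"

text \<open>A cycle of length m \<ge> 2 (two parallel edges form a cycle of length 2).\<close>
definition is_cycle :: "(nat \<times> nat \<times> nat) set \<Rightarrow> bool" where
  "is_cycle P \<longleftrightarrow> (\<exists>vs es. length vs \<ge> 2 \<and> distinct vs \<and> length es = length vs \<and>
      distinct es \<and> set es = P \<and>
      (\<forall>i<length es. endpoints (es ! i) = {vs ! i, vs ! (Suc i mod length vs)}))"

definition paths_and_cycles :: "(nat \<times> nat \<times> nat) set \<Rightarrow> bool" where
  "paths_and_cycles C \<longleftrightarrow> (\<exists>\<P>. \<Union>\<P> = C \<and> (\<forall>P\<in>\<P>. is_path P \<or> is_cycle P) \<and>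
      (\<forall>P\<in>\<P>. \<forall>Q\<in>\<P>. P \<noteq> Q \<longrightarrow> verts_of P \<inter> verts_of Q = {}))"

definition is_decomp :: "(nat \<times> nat \<times> nat) set \<Rightarrow> (nat \<times> nat \<times> nat) set list \<Rightarrow> bool" where
  "is_decomp G A \<longleftrightarrow> (\<forall>i<length A. \<forall>j<length A. i \<noteq> j \<longrightarrow> A ! i \<inter> A ! j = {}) \<and>
      \<Union>(set A) = G"

definition path_decomp :: "(nat \<times> nat \<times> nat) set \<Rightarrow> (nat \<times> nat \<times> nat) set list \<Rightarrow> bool" where
  "path_decomp G A \<longleftrightarrow> is_decomp G A \<and> (\<forall>i<length A. paths_and_cycles (A ! i))"

definition S :: "nat \<Rightarrow> (nat \<times> nat \<times> nat) set list \<Rightarrow> nat set" where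
  "S i A = {j. j < length A \<and> card (A ! j) = i}"

definition extendible ::
  "nat \<Rightarrow> (nat \<times> nat \<times> nat) set \<Rightarrow> (nat \<times> nat \<times> nat) set list \<Rightarrow> (nat \<times> nat \<times> nat) set \<Rightarrow> bool" where
  "extendible \<alpha> G A H \<longleftrightarrow> (\<exists>F A'. F \<subseteq> H - G \<and> path_decomp (G \<union> F) A' \<and>
      length A' = length A \<and> (\<forall>i<length A. A' ! i \<inter> G = A ! i) \<and>
      (\<forall>i<length A. card (A' ! i) \<ge> \<alpha>))"

end

theory Submission
  imports Defs
begin

lemma finite_KE: "finite (KE n m)"
proof -
  have "KE n m \<subseteq> {..<n} \<times> {..<n} \<times> {..<m}" by (auto simp: KE_def)
  thus ?thesis by (rule finite_subset) auto
qed

lemma KE_Suc: "KE (Suc n) m = KE n m \<union> ({..<n} \<times> {n} \<times> {..<m})"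
  by (auto simp: KE_def)

lemma card_KE2: "2 * card (KE n m) = m * (n * (n - 1))"
proof (induction n)
  case 0 have "KE 0 m = {}" by (auto simp: KE_def) then show ?case by simp
next
  case (Suc n)
  have d: "KE n m \<inter> ({..<n} \<times> {n} \<times> {..<m}) = {}" by (auto simp: KE_def)
  have "card (KE (Suc n) m) = card (KE n m) + n * m"
    unfolding KE_Suc by (subst card_Un_disjoint) (auto simp: finite_KE d card_cartesian_product)
  then show ?case using Suc by (cases n) (auto simp: algebra_simps)
qed

lemma card_KE: "card (KE n m) = m * (n * (n - 1) div 2)"
proof -
  have "even (n * (n - 1))" by auto
  then show ?thesis using card_KE2[of n m] by (metis div_mult_swap nonzero_mult_div_cancel_left zero_neq_numeral)
qed

lemma card_new: "lam \<le> mu \<Longrightarrow> card (KE n mu - KE n lam) = (mu - lam) * (n * (n - 1) div 2)"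
proof -
  assume "lam \<le> mu"
  then have "KE n lam \<subseteq> KE n mu" by (auto simp: KE_def)
  then show ?thesis by (simp add: card_Diff_subset finite_KE card_KE diff_mult_distrib)
qed

lemma path1: "endpoints e = {x, y} \<Longrightarrow> x \<noteq> y \<Longrightarrow> is_path {e}"
  unfolding is_path_def
  by (rule exI[of _ "[x,y]"], rule exI[of _ "[e]"]) auto

lemma path2: "e1 \<noteq> e2 \<Longrightarrow> endpoints e1 = {x, y} \<Longrightarrow> endpoints e2 = {y, z} \<Longrightarrow> distinct [x,y,z]
   \<Longrightarrow> is_path {e1, e2}"
  unfolding is_path_def
  apply (rule exI[of _ "[x,y,z]"], rule exI[of _ "[e1,e2]"])
  apply (auto simp: less_Suc_eq)
  done

lemma cyc2: "e1 \<noteq> e2 \<Longrightarrow> endpoints e1 = {x, y} \<Longrightarrow> endpoints e2 = {y, x} \<Longrightarrow> x \<noteq> y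
   \<Longrightarrow> is_cycle {e1, e2}"
  unfolding is_cycle_def
  apply (rule exI[of _ "[x,y]"], rule exI[of _ "[e1,e2]"])
  apply (auto simp: less_Suc_eq)
  done

lemma pc_single: "is_path P \<or> is_cycle P \<Longrightarrow> paths_and_cycles P"
  unfolding paths_and_cycles_def by (rule exI[of _ "{P}"]) auto

lemma two_edges:
  assumes "card P = 2" and "\<forall>e\<in>P. fst e < fst (snd e)"
  shows "paths_and_cycles P"
proof -
  obtain e1 e2 where P: "P = {e1, e2}" and ne: "e1 \<noteq> e2" using assms(1) by (auto simp: card_2_iff)
  obtain a b j where e1: "e1 = (a, b, j)" by (cases e1) auto
  obtain c d l where e2: "e2 = (c, d, l)" by (cases e2) auto
  have ab: "a < b" and cd: "c < d" using assms(2) P e1 e2 by auto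
  have en1: "endpoints e1 = {a, b}" and en2: "endpoints e2 = {c, d}" by (auto simp: endpoints_def e1 e2)
  consider "a = c \<and> b = d" | "a = c \<and> b \<noteq> d" | "a = d" | "b = c" | "b = d \<and> a \<noteq> c"
     | "a \<noteq> c \<and> a \<noteq> d \<and> b \<noteq> c \<and> b \<noteq> d" by blast
  then show ?thesis
  proof cases
    case 1 then show ?thesis unfolding P using ab
      by (intro pc_single disjI2 cyc2[OF ne en1]) (auto simp: en2 insert_commute)
  next
    case 2 then show ?thesis unfolding P using ab cd
      by (intro pc_single disjI1 path2[OF ne, of b a d]) (auto simp: en1 en2 insert_commute)
  next
    case 3 then show ?thesis unfolding P using ab cd
      by (intro pc_single disjI1 path2[OF ne, of b a c]) (auto simp: en1 en2 insert_commute)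
  next
    case 4 then show ?thesis unfolding P using ab cd
      by (intro pc_single disjI1 path2[OF ne, of a b d]) (auto simp: en1 en2 insert_commute)
  next
    case 5 then show ?thesis unfolding P using ab cd
      by (intro pc_single disjI1 path2[OF ne, of a b c]) (auto simp: en1 en2 insert_commute)
  next
    case 6
    show ?thesis unfolding paths_and_cycles_def
    proof (rule exI[of _ "{{e1},{e2}}"], intro conjI)
      show "\<Union> {{e1}, {e2}} = P" using P by auto
      show "\<forall>P\<in>{{e1}, {e2}}. is_path P \<or> is_cycle P"
        using path1[OF en1] path1[OF en2] ab cd by auto
      show "\<forall>P\<in>{{e1}, {e2}}. \<forall>Q\<in>{{e1}, {e2}}. P \<noteq> Q \<longrightarrow> verts_of P \<inter> verts_of Q = {}"
        using 6 by (auto simp: verts_of_def en1 en2)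
    qed
  qed
qed

lemma sum_S:
  "(\<Sum>i<length A. 2 - card (A ! i)) = 2 * card (S 0 A) + card (S 1 A)"
proof -
  let ?k = "length A" and ?f = "\<lambda>i. 2 - card (A ! i)"
  have "(\<Sum>i<?k. ?f i) = (\<Sum>i\<in>S 0 A \<union> S 1 A. ?f i)"
    by (rule sum.mono_neutral_right) (auto simp: S_def)
  also have "\<dots> = (\<Sum>i\<in>S 0 A. ?f i) + (\<Sum>i\<in>S 1 A. ?f i)"
    by (rule sum.union_disjoint) (auto simp: S_def)
  also have "(\<Sum>i\<in>S 0 A. ?f i) = (\<Sum>i\<in>S 0 A. 2)" by (rule sum.cong) (auto simp: S_def)
  also have "(\<Sum>i\<in>S 1 A. ?f i) = (\<Sum>i\<in>S 1 A. 1)" by (rule sum.cong) (auto simp: S_def)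
  finally show ?thesis by simp
qed

theorem proposition3:
  fixes n lam mu :: nat and A :: "(nat \<times> nat \<times> nat) set list"
  assumes "n > 0" and "lam > 0" and "mu > lam"
    and "path_decomp (KE n lam) A"
  shows "extendible 2 (KE n lam) A (KE n mu) \<longleftrightarrow>
         2 * card (S 0 A) + card (S 1 A) \<le> (mu - lam) * (n * (n - 1) div 2)"
proof -
  define G where "G = KE n lam"
  define H where "H = KE n mu"
  define k where "k = length A"
  define c where "c i = 2 - card (A ! i)" for i
  have GH: "G \<subseteq> H" using assms(3) by (auto simp: G_def H_def KE_def)
  have finH: "finite H" by (simp add: H_def finite_KE)
  have finG: "finite G" by (simp add: G_def finite_KE)
  have cardN: "card (H - G) = (mu - lam) * (n * (n - 1) div 2)"
    unfolding G_def H_def using assms(3) by (simp add: card_new)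
  have sumc: "(\<Sum>i<k. c i) = 2 * card (S 0 A) + card (S 1 A)"
    unfolding c_def k_def by (rule sum_S)
  have disjA: "\<And>i j. i < k \<Longrightarrow> j < k \<Longrightarrow> i \<noteq> j \<Longrightarrow> A ! i \<inter> A ! j = {}"
    and unA: "\<Union>(set A) = G" and pcA: "\<And>i. i < k \<Longrightarrow> paths_and_cycles (A ! i)"
    using assms(4) by (auto simp: path_decomp_def is_decomp_def G_def k_def)
  have AG: "\<And>i. i < k \<Longrightarrow> A ! i \<subseteq> G" using unA k_def nth_mem by blast
  have finA: "\<And>i. i < k \<Longrightarrow> finite (A ! i)" using AG finG finite_subset by blast
  show ?thesis
    unfolding G_def[symmetric] H_def[symmetric] cardN[symmetric] sumc[symmetric]
  proof
    assume "extendible 2 G A H"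
    then obtain F A' where F: "F \<subseteq> H - G" and pd: "path_decomp (G \<union> F) A'"
      and len: "length A' = k" and res: "\<And>i. i < k \<Longrightarrow> A' ! i \<inter> G = A ! i"
      and big: "\<And>i. i < k \<Longrightarrow> card (A' ! i) \<ge> 2"
      unfolding extendible_def k_def by blast
    have disjA': "\<And>i j. i < k \<Longrightarrow> j < k \<Longrightarrow> i \<noteq> j \<Longrightarrow> A' ! i \<inter> A' ! j = {}"
      and unA': "\<Union>(set A') = G \<union> F"
      using pd len by (auto simp: path_decomp_def is_decomp_def)
    have A'sub: "\<And>i. i < k \<Longrightarrow> A' ! i \<subseteq> G \<union> F" using unA' len nth_mem by blast
    have ci: "c i \<le> card (A' ! i - G)" if "i < k" for i
    proof -
      have fin: "finite (A' ! i)" using A'sub[OF that] finG finH F finite_subset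
        by (meson finite_Diff finite_UnI rev_finite_subset)
      have "A' ! i = A ! i \<union> (A' ! i - G)" using res[OF that] by blast
      then have "card (A' ! i) = card (A ! i) + card (A' ! i - G)"
        by (metis Diff_disjoint card_Un_disjoint fin finite_Un res[OF that] inf_commute Int_Diff Int_absorb
             inf.idem)
      then show ?thesis using big[OF that] by (simp add: c_def)
    qed
    have "(\<Sum>i<k. c i) \<le> (\<Sum>i<k. card (A' ! i - G))" by (rule sum_mono) (simp add: ci)
    also have "\<dots> = card (\<Union>i<k. A' ! i - G)"
    proof (rule card_UN_disjoint[symmetric])
      show "\<forall>i\<in>{..<k}. finite (A' ! i - G)"
        using A'sub F finH by (meson Diff_subset_conv finite_Diff2 finite_subset le_sup_iff lessThan_iff finG)
      show "\<forall>i\<in>{..<k}. \<forall>j\<in>{..<k}. i \<noteq> j \<longrightarrow> (A' ! i - G) \<inter> (A' ! j - G) = {}"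
        using disjA' by blast
    qed simp
    also have "\<dots> \<le> card (H - G)"
      by (rule card_mono) (use finH A'sub F in auto)
    finally show "(\<Sum>i<k. c i) \<le> card (H - G)" unfolding c_def k_def .
  next
    assume le: "(\<Sum>i<k. c i) \<le> card (H - G)"
    define N where "N = card (H - G)"
    obtain h where bij: "bij_betw h {0..<N} (H - G)"
      using ex_bij_betw_nat_finite[of "H - G"] finH N_def by auto
    have injh: "inj_on h {0..<N}" and imh: "h ` {0..<N} = H - G"
      using bij by (auto simp: bij_betw_def)
    define off where "off i = (\<Sum>j<i. c j)" for i
    define I where "I i = {off i..<off i + c i}" for i
    have offSuc: "off (Suc i) = off i + c i" for i by (simp add: off_def)
    have offmono: "i \<le> j \<Longrightarrow> off i \<le> off j" for i j
      unfolding off_def by (rule sum_mono2) auto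
    have ok: "off k \<le> N" using le by (simp add: off_def N_def)
    have Isub: "I i \<subseteq> {0..<N}" if "i < k" for i
      using offmono[of "Suc i" k] that ok by (auto simp: I_def offSuc)
    have Idisj: "I i \<inter> I j = {}" if "i \<noteq> j" for i j
    proof -
      have lt: "off a + c a \<le> off b" if "a < b" for a b
        using offmono[of "Suc a" b] that by (simp add: offSuc)
      show ?thesis
      proof (cases "i < j")
        case True
        from lt[OF True] show ?thesis by (auto simp: I_def)
      next
        case False
        then have "j < i" using \<open>i \<noteq> j\<close> by simp
        from lt[OF this] show ?thesis by (auto simp: I_def)
      qed
    qed
    have hI: "h ` I i \<subseteq> H - G" if "i < k" for i using Isub[OF that] imh by blast
    have cardhI: "card (h ` I i) = c i" if "i < k" for i
      using card_image[OF inj_on_subset[OF injh Isub[OF that]]] by (simp add: I_def)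
    define A' where "A' = map (\<lambda>i. A ! i \<union> h ` I i) [0..<k]"
    define F where "F = (\<Union>i<k. h ` I i)"
    have A'i: "A' ! i = A ! i \<union> h ` I i" if "i < k" for i using that by (simp add: A'_def)
    have lenA': "length A' = k" by (simp add: A'_def)
    have cardA': "card (A' ! i) = card (A ! i) + c i" if "i < k" for i
    proof -
      have "A ! i \<inter> h ` I i = {}" using AG[OF that] hI[OF that] by blast
      then show ?thesis unfolding A'i[OF that] cardhI[OF that, symmetric]
        using finA[OF that] by (simp add: card_Un_disjoint I_def)
    qed
    have e1: "F \<subseteq> H - G" using hI by (auto simp: F_def)
    have e2: "length A' = length A" using lenA' k_def by simp
    have e3: "A' ! i \<inter> G = A ! i" if "i < length A" for i
      proof -
        have i: "i < k" using that k_def by simp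
        show ?thesis unfolding A'i[OF i] using AG[OF i] hI[OF i] by blast
      qed
    have e4: "2 \<le> card (A' ! i)" if "i < length A" for i
        using cardA' that k_def c_def by auto
    have e5: "path_decomp (G \<union> F) A'"
        unfolding path_decomp_def is_decomp_def
      proof (intro conjI allI impI)
        show "A' ! i \<inter> A' ! j = {}" if "i < length A'" "j < length A'" "i \<noteq> j" for i j
        proof -
          have ij: "i < k" "j < k" using that lenA' by auto
          have "h ` I i \<inter> h ` I j = h ` (I i \<inter> I j)"
            using inj_on_image_Int[OF injh Isub[OF ij(1)] Isub[OF ij(2)]] by simp
          then have "h ` I i \<inter> h ` I j = {}" using Idisj[OF that(3)] by simp
          moreover have "A ! i \<inter> h ` I j = {}" using AG[OF ij(1)] hI[OF ij(2)] by blast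
          moreover have "h ` I i \<inter> A ! j = {}" using AG[OF ij(2)] hI[OF ij(1)] by blast
          moreover note disjA[OF ij that(3)]
          ultimately show ?thesis unfolding A'i[OF ij(1)] A'i[OF ij(2)] by (simp add: Int_Un_distrib Int_Un_distrib2)
        qed
        show "\<Union>(set A') = G \<union> F"
        proof -
          have "set A' = (\<lambda>i. A ! i \<union> h ` I i) ` {..<k}" by (simp add: A'_def atLeast0LessThan)
          moreover have "G = (\<Union>i<k. A ! i)" using unA k_def
            by (metis atLeast0LessThan list.set_map map_nth set_upt)
          ultimately show ?thesis by (simp add: F_def UN_Un_distrib)
        qed
        show "paths_and_cycles (A' ! i)" if "i < length A'" for i
        proof -
          have i: "i < k" using that lenA' by simp
          show ?thesis
          proof (cases "c i = 0")
            case True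
            then have "I i = {}" by (simp add: I_def)
            then show ?thesis using A'i[OF i] pcA[OF i] by simp
          next
            case False
            then have "card (A ! i) \<le> 1" by (simp add: c_def)
            then have "card (A' ! i) = 2" using cardA'[OF i] by (simp add: c_def)
            moreover have "A' ! i \<subseteq> H" using A'i[OF i] AG[OF i] hI[OF i] GH by blast
            ultimately show ?thesis by (intro two_edges) (auto simp: H_def KE_def)
          qed
        qed
      qed
    show "extendible 2 G A H"
      unfolding extendible_def using e1 e2 e3 e4 e5 by blast
  qed
qed

end
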